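(* Let $\lambda_0\in(0,1/2)$ and let $\nu$ be uniformly distributed on $[0,\pi]$, $n_1=\cos\nu$, $n_2=\sin\nu$. Then $$E\left[|n_1|\,n_2^2\arctan\left(\frac{4\lambda_0|n_1|}{4\lambda_0^2-1}\right)\right]=-\frac{\lambda_0}2-\frac23\lambda_0^3.$$
   Context: $\arctan$ denotes the principal branch with values in $(-\pi/2,\pi/2)$. *)

theory Defs
  imports "HOL-Analysis.Analysis"
begin

end

theory Submission imports Defs begin

lemma alg: fixes sn cs b :: real assumes sc: "sn^2+cs^2=1" and D: "b * cs^2+sn^2>0" and E: "1+(b^2-1) * cs^2>0"
 shows "1 + inverse (1 + ((1-b) * sn * cs/(b * cs^2+sn^2))^2) * (((cs * (1-b) * cs - sn * ((1-b) * sn)) * (b * cs^2+sn^2) - (1-b) * sn * cs * (2 * (cs * sn) - 2 * (sn * cs) * b)) / ((b * cs^2+sn^2) * (b * cs^2+sn^2))) = b/(1+(b^2-1) * cs^2)"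
proof -
  define D where "D = b * cs^2+sn^2"
  define E where "E = 1+(b^2-1) * cs^2"
  have Dp: "D > 0" "E > 0" using D E by (auto simp: D_def E_def)
  have h0: "D^2 + ((1-b) * sn * cs)^2 = E" unfolding D_def E_def using sc by algebra
  have h1: "1 + ((1-b) * sn * cs/D)^2 = E/D^2" using Dp h0 by (simp add: field_simps)
  have h2: "E + ((cs * (1-b) * cs - sn * ((1-b) * sn)) * D - (1-b) * sn * cs * (2 * (cs * sn) - 2 * (sn * cs) * b)) = b"
    unfolding D_def E_def using sc by algebra
  have "1 + inverse (1 + ((1-b) * sn * cs/D)^2) * (((cs * (1-b) * cs - sn * ((1-b) * sn)) * D - (1-b) * sn * cs * (2 * (cs * sn) - 2 * (sn * cs) * b)) / (D * D))
     = (E + ((cs * (1-b) * cs - sn * ((1-b) * sn)) * D - (1-b) * sn * cs * (2 * (cs * sn) - 2 * (sn * cs) * b))) / E"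
    unfolding h1 using Dp by (simp add: field_simps power2_eq_square)
  also have "\<dots> = b / E" by (simp add: h2)
  finally show ?thesis by (simp add: D_def E_def)
qed

lemma pos_b: fixes b :: real assumes b: "b > 0" shows "b * (cos x)\<^sup>2 + (sin x)\<^sup>2 > 0"
  proof (cases "cos x = 0")
    case True then have "(sin x)\<^sup>2 = 1" using sin_cos_squared_add[of x] by simp
    then show ?thesis using True by simp
  next
    case False then show ?thesis using b by (simp add: add_pos_nonneg)
  qed

lemma phi_deriv:
  fixes b :: real assumes b: "b > 0"
  shows "((\<lambda>x. x + arctan ((1 - b) * sin x * cos x / (b * (cos x)\<^sup>2 + (sin x)\<^sup>2)))
     has_real_derivative b / (1 + (b\<^sup>2 - 1) * (cos x)\<^sup>2)) (at x)"
proof -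
  have D: "b * (cos x)\<^sup>2 + (sin x)\<^sup>2 > 0"
  proof (cases "cos x = 0")
    case True then have "(sin x)\<^sup>2 = 1" using sin_cos_squared_add[of x] by simp
    then show ?thesis using True by simp
  next
    case False then show ?thesis using b by (simp add: add_pos_nonneg)
  qed
  have D2: "1 + (b\<^sup>2 - 1) * (cos x)\<^sup>2 > 0"
  proof -
    have "1 + (b\<^sup>2 - 1) * (cos x)\<^sup>2 = b\<^sup>2 * (cos x)\<^sup>2 + (sin x)\<^sup>2" using sin_cos_squared_add[of x] by algebra
    also have "\<dots> > 0"
    proof (cases "cos x = 0")
      case True then have "(sin x)\<^sup>2 = 1" using sin_cos_squared_add[of x] by simp
      then show ?thesis using True by simp
    next
      case False then show ?thesis using b by (simp add: add_pos_nonneg)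
    qed
    finally show ?thesis .
  qed
  show ?thesis
    apply (rule derivative_eq_intros refl)+
    using D apply simp
    using D apply simp
    apply (rule refl)
    using alg[OF sin_cos_squared_add[of x] D D2] by simp
qed

definition Qf :: "real \<Rightarrow> real \<Rightarrow> real \<Rightarrow> real" where
  "Qf b m x = (x/2 + sin x * cos x/2)/m - (2*m+1)/m^2 * x
     + b^3/m^2 * (x + arctan ((1 - b) * sin x * cos x / (b * (cos x)\<^sup>2 + (sin x)\<^sup>2)))"

lemma Q_deriv:
  fixes b m :: real assumes b: "b > 0" and m: "m = b^2 - 1" "m \<noteq> 0"
  shows "(Qf b m has_real_derivative (sin x)^4 / (1 + m * (cos x)\<^sup>2)) (at x)"
proof -
  have d1: "((\<lambda>x. (x/2 + sin x * cos x/2)/m - (2*m+1)/m^2 * x) has_real_derivative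
     ((cos x)^2/m - (2*m+1)/m^2)) (at x)"
  proof -
    have "((\<lambda>x. (x/2 + sin x * cos x/2)/m - (2*m+1)/m^2 * x) has_real_derivative
     ((1/2 + (cos x * cos x - sin x * sin x)/2)/m - (2*m+1)/m^2)) (at x)"
      by (auto intro!: derivative_eq_intros simp: m(2) field_simps)
    moreover have "(1/2 + (cos x * cos x - sin x * sin x)/2)/m = (cos x)^2/m"
    proof -
      have "sin x * sin x = 1 - cos x * cos x" using sin_cos_squared_add[of x]
        by (simp add: power2_eq_square algebra_simps)
      have "m = m * (cos x * cos x) + m * (sin x * sin x)" using sin_cos_squared_add[of x] by algebra
      then show ?thesis using m(2) by (simp add: field_simps power2_eq_square)
    qed
    ultimately show ?thesis by simp
  qed
  note d2 = DERIV_cmult[OF phi_deriv[OF b, of x], of "b^3/m^2"]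
  have E: "1 + m * (cos x)\<^sup>2 > 0"
  proof -
    have "1 + m * (cos x)\<^sup>2 = b^2 * (cos x)\<^sup>2 + (sin x)\<^sup>2" using m(1) sin_cos_squared_add[of x] by algebra
    also have "\<dots> > 0" using pos_b[of "b^2" x] b by simp
    finally show ?thesis .
  qed
  have eq: "(cos x)^2/m - (2*m+1)/m^2 + b^3/m^2 * (b / (1 + (b\<^sup>2 - 1) * (cos x)\<^sup>2))
     = (sin x)^4 / (1 + m * (cos x)\<^sup>2)"
  proof -
    have b4: "b^4 = (m+1)^2" using m by (simp add: power2_eq_square power4_eq_xxxx) 
    have "(cos x)^2/m - (2*m+1)/m^2 + b^3/m^2 * (b / (1 + m * (cos x)\<^sup>2))
     = (sin x)^4 / (1 + m * (cos x)\<^sup>2)"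
    proof -
      define E' where "E' = 1 + m * (cos x)\<^sup>2"
      have E0: "E' \<noteq> 0" using E by (simp add: E'_def)
      have P: "(cos x)^2 * m * E' - (2*m+1) * E' + b^4 = (sin x)^4 * m^2"
        unfolding E'_def using b4 sin_cos_squared_add[of x] by algebra
      have "(cos x)^2/m - (2*m+1)/m^2 + b^3/m^2 * (b / E')
        = ((cos x)^2 * m * E' - (2*m+1) * E' + b^4) / (m^2 * E')"
        using E0 m(2) by (simp add: field_simps power2_eq_square power3_eq_cube power4_eq_xxxx)
      also have "\<dots> = (sin x)^4 / E'" unfolding P using m(2) E0 by (simp add: power2_eq_square)
      finally show ?thesis by (simp add: E'_def)
    qed
    then show ?thesis using m by simp
  qed
  show ?thesis unfolding Qf_def[abs_def]
    using DERIV_add[OF d1 d2] eq by simp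
qed

definition Ff :: "real \<Rightarrow> real \<Rightarrow> real \<Rightarrow> real" where
  "Ff k b x = sin x ^ 3 / 3 * arctan (k * cos x) + k / 3 * Qf b (k^2) x"

lemma F_deriv:
  fixes k b :: real assumes k: "k \<noteq> 0" and b: "b > 0" "b^2 = 1 + k^2"
  shows "(Ff k b has_real_derivative cos x * (sin x)\<^sup>2 * arctan (k * cos x)) (at x)"
proof -
  have d1: "((\<lambda>x. sin x ^ 3 / 3 * arctan (k * cos x)) has_real_derivative
     (sin x ^ 2 * cos x * arctan (k * cos x) - k * sin x ^ 4 / (3 * (1 + k^2 * (cos x)\<^sup>2)))) (at x)"
  proof -
    have pos: "1 + k * k * (cos x * cos x) > 0" by (simp add: add_pos_nonneg)
    have pos2: "3 + k * (k * (cos x * (cos x * 3))) \<noteq> 0" using pos by (simp add: algebra_simps)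
    show ?thesis
      using pos pos2 by (auto intro!: derivative_eq_intros simp: field_simps power2_eq_square power3_eq_cube power4_eq_xxxx)
  qed
  have m1: "k^2 = b^2 - 1" using b by simp
  have m2: "k^2 \<noteq> 0" using k by simp
  note d2 = DERIV_cmult[OF Q_deriv[OF b(1) m1 m2, of x], of "k/3"]
  have "(Ff k b has_real_derivative (sin x ^ 2 * cos x * arctan (k * cos x) - k * sin x ^ 4 / (3 * (1 + k^2 * (cos x)\<^sup>2)))
     + k / 3 * ((sin x)^4 / (1 + k^2 * (cos x)\<^sup>2))) (at x)"
    unfolding Ff_def[abs_def] by (rule DERIV_add[OF d1 d2])
  then show ?thesis by (simp add: algebra_simps)
qed

lemma unif: fixes f :: "real \<Rightarrow> real"
  assumes fm: "f \<in> borel_measurable borel"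
  shows "(LINT x|uniform_measure lborel {0..pi}. f x) = (LINT x|lborel. indicator {0..pi} x *\<^sub>R f x) / pi"
proof -
  have e: "emeasure lborel {0..pi} = ennreal pi" by simp
  have d: "(\<lambda>x. indicator {0..pi} x / emeasure lborel {0..pi}) = (\<lambda>x. ennreal (indicator {0..pi} x / pi))"
  proof (rule ext)
    fix x show "indicator {0..pi} x / emeasure lborel {0..pi} = ennreal (indicator {0..pi} x / pi)"
      using divide_ennreal[of 1 pi] by (cases "x \<in> {0..pi}") (simp_all add: e)
  qed
  have "(LINT x|uniform_measure lborel {0..pi}. f x) = (LINT x|lborel. (indicator {0..pi} x / pi) *\<^sub>R f x)"
    unfolding uniform_measure_def d
    by (rule integral_density) (auto simp: fm)
  also have "\<dots> = (LINT x|lborel. indicator {0..pi} x *\<^sub>R f x) / pi"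
    by (simp add: divide_inverse mult.commute mult.left_commute)
  finally show ?thesis .
qed

lemma final_alg: fixes lam0 k b :: real
  assumes p: "0 < lam0" and dn: "1 - 4 * lam0\<^sup>2 > 0"
  and kd: "k = 4 * lam0 / (4 * lam0\<^sup>2 - 1)" and bd: "b = (1 + 4 * lam0\<^sup>2) / (1 - 4 * lam0\<^sup>2)"
  shows "k/3 * (1/2/k^2 - (2*k^2+1)/(k^2)^2 + b^3/(k^2)^2) = - lam0 / 2 - 2/3 * lam0 ^ 3"
proof -
  define D where "D = 1 - 4 * lam0\<^sup>2"
  have D0: "D > 0" using dn by (simp add: D_def)
  have kd': "k = - (4 * lam0) / D" unfolding kd D_def by (simp add: minus_divide_right)
  have bd': "b = (2 - D) / D" unfolding bd D_def by simp
  have l2: "lam0^2 = (1 - D)/4" by (simp add: D_def)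
  have k0: "k \<noteq> 0" using p D0 kd' by simp
  have "k/3 * (1/2/k^2 - (2*k^2+1)/(k^2)^2 + b^3/(k^2)^2) = (k^2/2 - (2*k^2+1) + b^3) / (3*k^3)"
    using k0 by (simp add: field_simps power2_eq_square power3_eq_cube)
  also have "k^2/2 - (2*k^2+1) + b^3 = 2 * (1-D)^2 * (4 - D) / D^3"
  proof -
    have k2: "k^2 = 4 * (1 - D) / D^2" unfolding kd' using l2 by (simp add: power_divide power_mult_distrib)
    show ?thesis unfolding bd' k2 using D0 by (simp add: field_simps power2_eq_square power3_eq_cube)
  qed
  also have "k^3 = - (64 * lam0^3) / D^3" unfolding kd' by (simp add: power_divide power_mult_distrib)
  also have "2 * (1-D)^2 * (4 - D) / D^3 / (3 * (- (64 * lam0^3) / D^3)) = -(((1-D)^2 * (4 - D)) / (96 * lam0^3))"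
    using D0 p by (simp add: field_simps)
  also have "\<dots> = - lam0 / 2 - 2/3 * lam0 ^ 3"
  proof -
    have h1: "(1 - D)^2 = 16 * lam0^4" unfolding D_def by (simp add: power2_eq_square power4_eq_xxxx)
    have h2: "4 - D = 3 + 4 * lam0^2" unfolding D_def by simp
    show ?thesis unfolding h1 h2 using p by (simp add: field_simps power2_eq_square power3_eq_cube power4_eq_xxxx)
  qed
  finally show ?thesis .
qed

theorem lemma9:
  fixes lam0 :: real
  assumes "0 < lam0" and "lam0 < 1/2"
  shows "(LINT \<nu>|uniform_measure lborel {0..pi}.
            \<bar>cos \<nu>\<bar> * (sin \<nu>)\<^sup>2 *
            arctan (4 * lam0 * \<bar>cos \<nu>\<bar> / (4 * lam0\<^sup>2 - 1)))
         = - lam0 / 2 - 2/3 * lam0 ^ 3"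
proof -
  define k where "k = 4 * lam0 / (4 * lam0\<^sup>2 - 1)"
  define b where "b = (1 + 4 * lam0\<^sup>2) / (1 - 4 * lam0\<^sup>2)"
  have l2: "lam0\<^sup>2 < 1/4"
  proof -
    have "lam0 * lam0 < 1/2 * (1/2)" using assms by (intro mult_strict_mono) auto
    then show ?thesis by (simp add: power2_eq_square)
  qed
  have dn: "4 * lam0\<^sup>2 - 1 \<noteq> 0" "1 - 4 * lam0\<^sup>2 > 0" using l2 by auto
  have k0: "k \<noteq> 0" using assms dn unfolding k_def by simp
  have b0: "b > 0" using dn unfolding b_def by (simp add: add_pos_nonneg)
  have bk: "b^2 = 1 + k^2"
  proof -
    define D where "D = 1 - 4 * lam0\<^sup>2"
    have D0: "D > 0" using dn by (simp add: D_def)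
    have kd': "k = - (4 * lam0) / D" unfolding k_def D_def by (simp add: minus_divide_right)
    have bd': "b = (2 - D) / D" unfolding b_def D_def by simp
    have l2: "lam0^2 = (1 - D)/4" by (simp add: D_def)
    have k2: "k^2 = 4 * (1 - D) / D^2" unfolding kd' using l2 by (simp add: power_divide power_mult_distrib)
    show ?thesis unfolding k2 bd' using D0 by (simp add: field_simps power2_eq_square)
  qed
  define f where "f x = cos x * (sin x)\<^sup>2 * arctan (k * cos x)" for x
  have eqf: "(\<lambda>\<nu>. \<bar>cos \<nu>\<bar> * (sin \<nu>)\<^sup>2 * arctan (4 * lam0 * \<bar>cos \<nu>\<bar> / (4 * lam0\<^sup>2 - 1))) = f"
  proof (rule ext)
    fix x
    have "4 * lam0 * \<bar>cos x\<bar> / (4 * lam0\<^sup>2 - 1) = k * \<bar>cos x\<bar>" unfolding k_def by simp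
    moreover have "\<bar>cos x\<bar> * arctan (k * \<bar>cos x\<bar>) = cos x * arctan (k * cos x)"
      by (cases "cos x \<ge> 0") (auto simp: arctan_minus)
    ultimately show "\<bar>cos x\<bar> * (sin x)\<^sup>2 * arctan (4 * lam0 * \<bar>cos x\<bar> / (4 * lam0\<^sup>2 - 1)) = f x"
      unfolding f_def by (metis mult.commute mult.left_commute)
  qed
  have fc: "continuous_on UNIV f" unfolding f_def[abs_def] by (intro continuous_intros)
  have fm: "f \<in> borel_measurable borel"
    using borel_measurable_continuous_onI[OF fc] by simp
  have ftc: "(LINT x|lborel. indicator {0..pi} x *\<^sub>R f x) = Ff k b pi - Ff k b 0"
  proof (rule integral_FTC_atLeastAtMost)
    show "0 \<le> pi" by simp
    fix x :: real
    show "(Ff k b has_vector_derivative f x) (at x within {0..pi})"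
      unfolding f_def has_real_derivative_iff_has_vector_derivative[symmetric]
      by (rule has_field_derivative_at_within[OF F_deriv[OF k0 b0 bk]])
  next
    show "continuous_on {0..pi} f" using continuous_on_subset[OF fc] by blast
  qed
  have Fv: "Ff k b pi - Ff k b 0 = k/3 * (pi/2/k^2 - (2*k^2+1)/(k^2)^2 * pi + b^3/(k^2)^2 * pi)"
    unfolding Ff_def Qf_def by (simp add: field_simps)
  have "(LINT \<nu>|uniform_measure lborel {0..pi}.
            \<bar>cos \<nu>\<bar> * (sin \<nu>)\<^sup>2 *
            arctan (4 * lam0 * \<bar>cos \<nu>\<bar> / (4 * lam0\<^sup>2 - 1)))
        = k/3 * (1/2/k^2 - (2*k^2+1)/(k^2)^2 + b^3/(k^2)^2)"
    unfolding eqf unif[OF fm] ftc Fv by (simp add: field_simps)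
  also have "\<dots> = - lam0 / 2 - 2/3 * lam0 ^ 3"
    by (rule final_alg[OF assms(1) dn(2) k_def b_def])
  finally show ?thesis .
qed

end
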